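(* Let $m\in\mathbb N$, $b>0$, $\tau>\gamma_0=1.5088\ldots$, $A>0$, $n\in\mathbb N$, and $\sigma:=n/(mb\tau)$. Let $f:\mathbb C^m\to\mathbb C$ be entire with $|f(w)|\le A\exp(\sigma\sum_{j=1}^m|w_j|)$ for all $w\in\mathbb C^m$. Then there is a polynomial $P_n\in\mathcal Q_{n,m}$ such that $$\|f-P_n\|_{L_\infty(Q^m_b)}\le C A e^{n\psi(\tau)},\qquad C\le m2^m\big(1-1/(\tau+\sqrt{1+\tau^2})\big)^{-m}.$$
   Context: $\psi(\tau)=\frac{\sqrt{1+\tau^2}}{\tau}-\log(\tau+\sqrt{1+\tau^2})$, whose unique positive zero is $\gamma_0=1.5088\ldots$. $\mathcal Q_{n,m}$ is the set of polynomials $\sum_{k\in\mathbb Z^m_+,\max_jk_j\le n}c_kx^k$ with complex coefficients. $Q^m_b=\{x\in\mathbb R^m:\max_j|x_j|\le b\}$. *)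

theory Defs
  imports "HOL-Analysis.Analysis"
begin

definition psi :: "real \<Rightarrow> real" where
  "psi t = sqrt (1 + t\<^sup>2) / t - ln (t + sqrt (1 + t\<^sup>2))"

text \<open>gamma0 = the unique positive zero of psi (approx. 1.5088).\<close>
definition gamma0 :: real where
  "gamma0 = (THE t. t > 0 \<and> psi t = 0)"

definition entire_cm :: "(complex ^ 'm \<Rightarrow> complex) \<Rightarrow> bool" where
  "entire_cm f \<longleftrightarrow> (\<forall>z. \<exists>L. (f has_derivative L) (at z) \<and> (\<forall>c x. L (c *s x) = c * L x))"

definition polyQ :: "nat \<Rightarrow> (complex ^ 'm \<Rightarrow> complex) set" where
  "polyQ n = {P. \<exists>c :: ('m \<Rightarrow> nat) \<Rightarrow> complex.
      P = (\<lambda>x. \<Sum>k\<in>{k. \<forall>j. k j \<le> n}. c k * (\<Prod>j\<in>UNIV. (x $ j) ^ k j))}"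

definition cvec :: "real ^ 'm \<Rightarrow> complex ^ 'm" where
  "cvec x = (\<chi> j. complex_of_real (x $ j))"

definition cubeQ :: "real \<Rightarrow> (real ^ 'm) set" where
  "cubeQ b = {x. \<forall>j. \<bar>x $ j\<bar> \<le> b}"

end

theory Submission
  imports Defs "HOL-Complex_Analysis.Complex_Analysis"
begin
fun cheb :: "nat \<Rightarrow> complex \<Rightarrow> complex" where
  "cheb 0 y = 1"
| "cheb (Suc 0) y = y"
| "cheb (Suc (Suc j)) y = 2 * y * cheb (Suc j) y - cheb j y"

lemma cheb_J2:
  assumes "z \<noteq> 0"
  shows "cheb l ((z + inverse z) / 2) = (z ^ l + inverse z ^ l) / 2
       \<and> cheb (Suc l) ((z + inverse z) / 2) = (z ^ Suc l + inverse z ^ Suc l) / 2"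
proof (induction l)
  case 0
  then show ?case by simp
next
  case (Suc l)
  define w where "w = (z + inverse z) / 2"
  from Suc.IH have h1: "cheb l w = (z ^ l + inverse z ^ l) / 2"
    and h2: "cheb (Suc l) w = (z ^ Suc l + inverse z ^ Suc l) / 2" unfolding w_def by auto
  have "cheb (Suc (Suc l)) w = 2*w*cheb (Suc l) w - cheb l w" by simp
  also have "\<dots> = 2*w*((z^Suc l + inverse z^Suc l)/2) - (z^l + inverse z^l)/2"
    by (simp only: h1 h2)
  also have "\<dots> = (z ^ Suc (Suc l) + inverse z ^ Suc (Suc l)) / 2"
    unfolding w_def using assms by (simp add: field_simps)
  finally have h3: "cheb (Suc (Suc l)) w = (z ^ Suc (Suc l) + inverse z ^ Suc (Suc l)) / 2" .
  show ?case unfolding w_def[symmetric] using h2 h3 by blast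
qed

lemma cheb_J:
  assumes "z \<noteq> 0"
  shows "cheb l ((z + inverse z) / 2) = (z ^ l + inverse z ^ l) / 2"
  using cheb_J2[OF assms] by blast

lemma cheb_bound:
  assumes "Im y = 0" "norm y \<le> 1"
  shows "norm (cheb l y) \<le> 1"
proof -
  define z where "z = Complex (Re y) (sqrt (1 - (Re y)^2))"
  have ry: "\<bar>Re y\<bar> \<le> 1" using assms by (simp add: cmod_def)
  hence ry2: "(Re y)^2 \<le> 1" by (simp add: abs_square_le_1)
  have nz: "norm z = 1" unfolding z_def cmod_def using ry2 by simp
  hence z0: "z \<noteq> 0" by auto
  have "z * cnj z = 1" using complex_norm_square[of z] nz by simp
  hence ic: "inverse z = cnj z" using z0 by (simp add: field_simps)
  have "(z + inverse z)/2 = y" unfolding ic using assms unfolding z_def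
    by (simp add: complex_eq_iff)
  hence "cheb l y = (z ^ l + inverse z ^ l) / 2" using cheb_J[OF z0] by simp
  also have "norm \<dots> \<le> (norm (z^l) + norm (inverse z ^ l)) / 2"
    by (simp add: norm_divide norm_triangle_ineq)
  also have "\<dots> = 1" using nz by (simp add: norm_power norm_inverse)
  finally show ?thesis .
qed

definition omg :: "nat \<Rightarrow> complex" where "omg N = exp (2 * of_real pi * \<i> / of_nat N)"

lemma omg_pow_N: "N > 0 \<Longrightarrow> omg N ^ N = 1"
  unfolding omg_def by (simp add: exp_of_nat_mult[symmetric])

lemma omg_pow_inj:
  assumes "N > 0" "a < N" "c < N" "omg N ^ a = omg N ^ c"
  shows "a = c"
proof -
  have "exp (of_nat a * (2 * of_real pi * \<i> / of_nat N)) = exp (of_nat c * (2 * of_real pi * \<i> / of_nat N))"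
    using assms(4) unfolding omg_def by (simp add: exp_of_nat_mult[symmetric])
  then obtain k :: int where k: "of_nat a * (2 * of_real pi * \<i> / of_nat N) = of_nat c * (2 * of_real pi * \<i> / of_nat N) + of_int (2*k) * pi * \<i>"
    using exp_eq by blast
  hence "(2*pi*\<i>) * (of_nat a) = (2*pi*\<i>) * (of_nat c + of_int k * of_nat N :: complex)" using assms(1)
    by (simp add: field_simps)
  hence "(of_nat a :: complex) = of_nat c + of_int k * of_nat N" by simp
  hence "complex_of_real (real a) = of_real (real c + real_of_int k * real N)" by simp
  hence e: "real a = real c + real_of_int k * real N" by (simp only: of_real_eq_iff)
  show ?thesis
  proof (cases "k = 0")
    case True then show ?thesis using e by simp
  next
    case False
    hence "\<bar>real_of_int k\<bar> \<ge> 1" by linarith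
    hence "\<bar>real_of_int k * real N\<bar> \<ge> real N" using assms(1) by (simp add: abs_mult)
    moreover have "\<bar>real a - real c\<bar> < real N" using assms by linarith
    ultimately show ?thesis using e by linarith
  qed
qed

lemma omg_nz: "omg N \<noteq> 0" unfolding omg_def by simp

lemma geom_unity:
  assumes "N > 0" "a < N" "c < N"
  shows "(\<Sum>s<N. (omg N ^ a * inverse (omg N ^ c)) ^ s) = (if a = c then of_nat N else 0)"
proof (cases "a = c")
  case True then show ?thesis using omg_nz by simp
next
  case False
  define r where "r = omg N ^ a * inverse (omg N ^ c)"
  have r1: "r \<noteq> 1" using False omg_pow_inj[OF assms] omg_nz unfolding r_def
    by (auto simp: field_simps)
  have "r ^ N = (omg N ^ N) ^ a * inverse ((omg N ^ N) ^ c)"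
    unfolding r_def by (simp add: power_mult_distrib power_inverse power_mult[symmetric] mult.commute)
  hence rN: "r ^ N = 1" using omg_pow_N[OF assms(1)] by simp
  have "(\<Sum>s<N. r ^ s) = (r ^ N - 1) / (r - 1)" using r1 by (rule geometric_sum)
  then show ?thesis using rN False unfolding r_def by simp
qed

definition Jb :: "real \<Rightarrow> complex \<Rightarrow> complex" where
  "Jb b z = of_real b * (z + inverse z) / 2"
definition node :: "real \<Rightarrow> nat \<Rightarrow> nat \<Rightarrow> complex" where
  "node R NN s = of_real R * omg NN ^ s"
definition cc :: "nat \<Rightarrow> complex" where "cc l = (if l = 0 then 1 else 2)"
definition ahat :: "real \<Rightarrow> real \<Rightarrow> nat \<Rightarrow> (complex \<Rightarrow> complex) \<Rightarrow> nat \<Rightarrow> complex" where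
  "ahat b R NN g l = (\<Sum>s<NN. g (Jb b (node R NN s)) * inverse (node R NN s) ^ l) / of_nat NN"
definition op1 :: "real \<Rightarrow> real \<Rightarrow> nat \<Rightarrow> nat \<Rightarrow> (complex \<Rightarrow> complex) \<Rightarrow> complex \<Rightarrow> complex" where
  "op1 b R NN n g y = (\<Sum>l\<le>n. cc l * ahat b R NN g l * cheb l (y / of_real b))"

lemma norm_node: "R \<ge> 0 \<Longrightarrow> norm (node R NN s) = R"
  unfolding node_def omg_def by (simp add: norm_mult norm_power)

lemma ahat_bound:
  assumes "NN > 0" "R > 0" "\<And>s. s < NN \<Longrightarrow> norm (g (Jb b (node R NN s))) \<le> B"
  shows "norm (ahat b R NN g l) \<le> B / R ^ l"
proof -
  have "norm (\<Sum>s<NN. g (Jb b (node R NN s)) * inverse (node R NN s) ^ l)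
      \<le> (\<Sum>s<NN. B / R ^ l)"
  proof (rule sum_norm_le)
    fix s assume "s \<in> {..<NN}"
    have e: "norm (g (Jb b (node R NN s)) * inverse (node R NN s) ^ l) = norm (g (Jb b (node R NN s))) / R ^ l"
      using assms norm_node[of R NN s] by (simp add: norm_mult norm_power norm_inverse norm_divide power_inverse divide_inverse)
    show "norm (g (Jb b (node R NN s)) * inverse (node R NN s) ^ l) \<le> B / R ^ l"
      unfolding e using assms \<open>s \<in> {..<NN}\<close> by (intro divide_right_mono) auto
  qed
  hence "norm (\<Sum>s<NN. g (Jb b (node R NN s)) * inverse (node R NN s) ^ l) \<le> real NN * (B / R ^ l)"
    by simp
  then show ?thesis using assms(1) unfolding ahat_def
    by (simp add: norm_divide pos_divide_le_eq mult.commute)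
qed

lemma geo_cc: "R > 1 \<Longrightarrow> (\<Sum>l\<le>n. norm (cc l) / R ^ l) = (R+1)/(R-1) - 2 / (R-1) / R ^ n"
proof (induction n)
  case 0
  have h: "R - 1 \<noteq> 0" using 0 by simp
  have "(R+1)/(R-1) - 2/(R-1) = ((R+1)-2)/(R-1)" by (rule diff_divide_distrib[symmetric])
  also have "\<dots> = (R-1)/(R-1)" by simp
  also have "\<dots> = 1" using h by simp
  finally have X: "(R+1)/(R-1) - 2/(R-1) = 1" .
  show ?case using X by (simp add: cc_def)
next
  case (Suc n)
  have h1: "R - 1 \<noteq> 0" "R ^ n \<noteq> 0" "R \<noteq> 0" using Suc.prems by auto
  have key: "2/(R-1)/R^n - 2/(R*R^n) = 2/(R-1)/(R*R^n)"
    using h1 by (simp add: field_simps)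
  have "(\<Sum>l\<le>Suc n. norm (cc l) / R ^ l) = (\<Sum>l\<le>n. norm (cc l) / R ^ l) + 2 / (R*R^n)"
    by (simp add: cc_def)
  also have "\<dots> = (R+1)/(R-1) - (2/(R-1)/R^n - 2/(R*R^n))" using Suc by simp
  also have "\<dots> = (R+1)/(R-1) - 2/(R-1)/(R*R^n)" by (simp only: key)
  finally show ?case by simp
qed

lemma op1_bound:
  assumes "NN > 0" "R > 1" "b > 0" "Im y = 0" "norm y \<le> b"
    and "\<And>s. s < NN \<Longrightarrow> norm (g (Jb b (node R NN s))) \<le> B"
  shows "norm (op1 b R NN n g y) \<le> (R+1)/(R-1) * B"
proof -
  have B0: "B \<ge> 0" using assms(6)[of 0] assms(1) by (meson norm_ge_zero order_trans)
  have "norm (op1 b R NN n g y) \<le> (\<Sum>l\<le>n. norm (cc l) / R ^ l * B)"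
    unfolding op1_def
  proof (rule sum_norm_le)
    fix l assume "l \<in> {..n}"
    have c: "norm (cheb l (y / of_real b)) \<le> 1"
      using assms by (intro cheb_bound) (auto simp: norm_divide)
    have a: "norm (ahat b R NN g l) \<le> B / R ^ l"
      using assms by (intro ahat_bound) auto
    have "norm (cc l * ahat b R NN g l * cheb l (y / of_real b))
        = norm (cc l) * norm (ahat b R NN g l) * norm (cheb l (y / of_real b))"
      by (simp add: norm_mult)
    also have "\<dots> \<le> norm (cc l) * (B / R ^ l) * 1"
      by (intro mult_mono mult_left_mono a c) (use B0 assms in auto)
    finally show "norm (cc l * ahat b R NN g l * cheb l (y / of_real b)) \<le> norm (cc l) / R ^ l * B"
      by simp
  qed
  also have "\<dots> = (\<Sum>l\<le>n. norm (cc l) / R ^ l) * B" by (rule sum_distrib_right[symmetric])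
  also have "\<dots> = ((R+1)/(R-1) - 2 / (R-1) / R ^ n) * B"
    by (simp only: geo_cc[OF assms(2)])
  also have "\<dots> \<le> (R+1)/(R-1) * B"
    using assms(2) B0 by (intro mult_right_mono) auto
  finally show ?thesis .
qed

lemma ahat_diff: "ahat b R NN (\<lambda>t. g1 t - g2 t) l = ahat b R NN g1 l - ahat b R NN g2 l"
  unfolding ahat_def by (simp add: sum_subtractf left_diff_distrib diff_divide_distrib)

lemma op1_diff: "op1 b R NN n (\<lambda>t. g1 t - g2 t) y = op1 b R NN n g1 y - op1 b R NN n g2 y"
  unfolding op1_def ahat_diff by (simp add: sum_subtractf algebra_simps)

lemma ahat_sum: "finite J \<Longrightarrow> ahat b R NN (\<lambda>t. \<Sum>j\<in>J. a j * g j t) l = (\<Sum>j\<in>J. a j * ahat b R NN (g j) l)"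
  unfolding ahat_def
  by (simp add: sum_distrib_right sum_distrib_left sum_divide_distrib mult.assoc flip: sum.swap[of _ J])

lemma op1_sum: "finite J \<Longrightarrow> op1 b R NN n (\<lambda>t. \<Sum>j\<in>J. a j * g j t) y = (\<Sum>j\<in>J. a j * op1 b R NN n (g j) y)"
  unfolding op1_def using ahat_sum[of J b R NN a g]
  by (simp add: sum_distrib_right sum_distrib_left mult_ac sum.swap[of _ J])

lemma pw_swap: "((x::complex) ^ s) ^ j * inverse ((x ^ s) ^ l) = (x ^ j * inverse (x ^ l)) ^ s"
  by (simp add: power_mult_distrib power_inverse flip: power_mult) (simp add: mult.commute)

lemma node_term:
  assumes "R > 0" "b \<noteq> 0"
  shows "cheb j (Jb b (node R NN s) / of_real b) * inverse (node R NN s) ^ l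
     = (of_real (R^j / R^l) * (omg NN ^ j * inverse (omg NN ^ l)) ^ s
        + of_real (1 / R^(j+l)) * (omg NN ^ 0 * inverse (omg NN ^ (j+l))) ^ s) / 2"
proof -
  define z where "z = node R NN s"
  define u where "u = omg NN ^ s"
  have u0: "u \<noteq> 0" unfolding u_def using omg_nz by simp
  have zu: "z = of_real R * u" unfolding z_def u_def node_def ..
  have z0: "z \<noteq> 0" using assms u0 zu by simp
  have e: "Jb b z / of_real b = (z + inverse z) / 2" unfolding Jb_def using assms by simp
  have "cheb j (Jb b z / of_real b) = (z ^ j + inverse z ^ j) / 2" unfolding e by (rule cheb_J[OF z0])
  hence "cheb j (Jb b z / of_real b) * inverse z ^ l = (z ^ j * inverse (z ^ l) + inverse (z ^ (j+l))) / 2"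
    using z0 by (simp add: power_inverse power_add field_simps)
  also have "z ^ j * inverse (z ^ l) = of_real (R^j / R^l) * (u ^ j * inverse (u ^ l))"
    unfolding zu using assms by (simp add: power_mult_distrib field_simps)
  also have "inverse (z ^ (j+l)) = of_real (1 / R^(j+l)) * (u ^ 0 * inverse (u ^ (j+l)))"
    unfolding zu using assms by (simp add: power_mult_distrib field_simps)
  finally show ?thesis unfolding z_def u_def pw_swap by simp
qed

lemma ahat_cheb:
  assumes "NN > 0" "j + l < NN" "b \<noteq> 0" "R > 0"
  shows "ahat b R NN (\<lambda>t. cheb j (t / of_real b)) l = (if j = l then (if l = 0 then 1 else 1/2) else 0)"
proof -
  have "(\<Sum>s<NN. cheb j (Jb b (node R NN s) / of_real b) * inverse (node R NN s) ^ l)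
     = (of_real (R^j / R^l) * (\<Sum>s<NN. (omg NN ^ j * inverse (omg NN ^ l)) ^ s)
        + of_real (1 / R^(j+l)) * (\<Sum>s<NN. (omg NN ^ 0 * inverse (omg NN ^ (j+l))) ^ s)) / 2"
    unfolding node_term[OF assms(4) assms(3)]
    by (simp only: sum_distrib_left sum.distrib[symmetric] sum_divide_distrib)
  also have "\<dots> = (of_real (R^j / R^l) * (if j = l then of_nat NN else 0)
        + of_real (1 / R^(j+l)) * (if 0 = j + l then of_nat NN else 0)) / 2"
    using assms by (simp only: geom_unity)
  finally show ?thesis using assms unfolding ahat_def by auto
qed

definition spanC :: "real \<Rightarrow> nat \<Rightarrow> (complex \<Rightarrow> complex) \<Rightarrow> bool" where
  "spanC b N g \<longleftrightarrow> (\<exists>\<alpha>. \<forall>y. g y = (\<Sum>j\<le>N. \<alpha> j * cheb j (y / of_real b)))"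

lemma spanC_mono:
  assumes "N \<le> N'" "spanC b N g" shows "spanC b N' g"
proof -
  obtain \<alpha> where a: "\<And>y. g y = (\<Sum>j\<le>N. \<alpha> j * cheb j (y / of_real b))"
    using assms(2) unfolding spanC_def by blast
  have E: "g y = (\<Sum>j\<le>N'. (if j \<le> N then \<alpha> j else 0) * cheb j (y / of_real b))" for y
  proof -
    have "(\<Sum>j\<le>N'. (if j \<le> N then \<alpha> j else 0) * cheb j (y / of_real b))
        = (\<Sum>j\<le>N'. if j \<in> {j. j \<le> N} then \<alpha> j * cheb j (y / of_real b) else 0)"
      by (rule sum.cong) auto
    also have "\<dots> = (\<Sum>j\<in>{..N'} \<inter> {j. j \<le> N}. \<alpha> j * cheb j (y / of_real b))"
      by (simp only: sum.inter_restrict[symmetric] finite_atMost)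
    also have "{..N'} \<inter> {j. j \<le> N} = {..N}" using assms(1) by auto
    finally show ?thesis unfolding a by simp
  qed
  show ?thesis unfolding spanC_def by (intro exI[of _ "\<lambda>j. if j \<le> N then \<alpha> j else 0"] allI E)
qed

lemma spanC_add:
  assumes "spanC b N g1" "spanC b N g2" shows "spanC b N (\<lambda>y. g1 y + g2 y)"
proof -
  obtain \<alpha> where a: "\<And>y. g1 y = (\<Sum>j\<le>N. \<alpha> j * cheb j (y / of_real b))"
    using assms(1) unfolding spanC_def by blast
  obtain \<beta> where c: "\<And>y. g2 y = (\<Sum>j\<le>N. \<beta> j * cheb j (y / of_real b))"
    using assms(2) unfolding spanC_def by blast
  have E: "g1 y + g2 y = (\<Sum>j\<le>N. (\<alpha> j + \<beta> j) * cheb j (y / of_real b))" for y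
    unfolding a c by (simp add: sum.distrib distrib_right)
  show ?thesis unfolding spanC_def by (intro exI[of _ "\<lambda>j. \<alpha> j + \<beta> j"] allI E)
qed

lemma spanC_scale:
  assumes "spanC b N g" shows "spanC b N (\<lambda>y. c * g y)"
proof -
  obtain \<alpha> where a: "\<And>y. g y = (\<Sum>j\<le>N. \<alpha> j * cheb j (y / of_real b))"
    using assms(1) unfolding spanC_def by blast
  have E: "c * g y = (\<Sum>j\<le>N. (c * \<alpha> j) * cheb j (y / of_real b))" for y
    unfolding a by (simp add: sum_distrib_left mult.assoc)
  show ?thesis unfolding spanC_def by (intro exI[of _ "\<lambda>j. c * \<alpha> j"] allI E)
qed

lemma spanC_zero: "spanC b N (\<lambda>y. 0)"
  unfolding spanC_def by (rule exI[of _ "\<lambda>_. 0"]) simp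

lemma spanC_sum:
  assumes "finite J" "\<And>j. j \<in> J \<Longrightarrow> spanC b N (g j)"
  shows "spanC b N (\<lambda>y. \<Sum>j\<in>J. g j y)"
  using assms
proof (induction J rule: finite_induct)
  case empty then show ?case by (simp add: spanC_zero)
next
  case (insert x F)
  then show ?case by (simp add: spanC_add)
qed

lemma spanC_cheb:
  assumes "k \<le> N" shows "spanC b N (\<lambda>y. cheb k (y / of_real b))"
proof -
  have E: "cheb k (y / of_real b) = (\<Sum>j\<le>N. (if j = k then 1 else 0) * cheb j (y / of_real b))" for y
  proof -
    have "(\<Sum>j\<le>N. (if j = k then 1 else 0) * cheb j (y / of_real b))
       = (\<Sum>j\<le>N. if j = k then cheb j (y / of_real b) else 0)"
      by (rule sum.cong) auto
    then show ?thesis using assms by simp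
  qed
  show ?thesis unfolding spanC_def by (intro exI[of _ "\<lambda>j. if j = k then 1 else 0"] allI E)
qed

lemma spanC_x_cheb:
  assumes "b \<noteq> 0"
  shows "spanC b (Suc j) (\<lambda>y. y * cheb j (y / of_real b))"
proof (cases j)
  case 0
  have "y * cheb j (y / of_real b) = of_real b * cheb 1 (y / of_real b)" for y
    using 0 assms by simp
  then show ?thesis using spanC_scale[OF spanC_cheb[of 1 "Suc j" b], of "of_real b"] 0 by simp
next
  case (Suc i)
  have "y * cheb j (y / of_real b) = (of_real b / 2) * cheb (Suc (Suc i)) (y / of_real b) + (of_real b / 2) * cheb i (y / of_real b)" for y
    using Suc assms by (simp add: field_simps)
  moreover have "spanC b (Suc j) (\<lambda>y. (of_real b / 2) * cheb (Suc (Suc i)) (y / of_real b) + (of_real b / 2) * cheb i (y / of_real b))"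
    using Suc by (intro spanC_add spanC_scale spanC_cheb) auto
  ultimately show ?thesis by simp
qed

lemma spanC_mulx:
  assumes "b \<noteq> 0" "spanC b N g" shows "spanC b (Suc N) (\<lambda>y. y * g y)"
proof -
  obtain \<alpha> where a: "\<And>y. g y = (\<Sum>j\<le>N. \<alpha> j * cheb j (y / of_real b))"
    using assms(2) unfolding spanC_def by blast
  have e: "y * g y = (\<Sum>j\<le>N. \<alpha> j * (y * cheb j (y / of_real b)))" for y
    unfolding a by (simp add: sum_distrib_left mult_ac)
  have "spanC b (Suc N) (\<lambda>y. \<Sum>j\<le>N. \<alpha> j * (y * cheb j (y / of_real b)))"
    by (intro spanC_sum spanC_scale spanC_mono[OF _ spanC_x_cheb[OF assms(1)]]) auto
  then show ?thesis unfolding e .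
qed

lemma spanC_pow: "b \<noteq> 0 \<Longrightarrow> spanC b k (\<lambda>y. y ^ k)"
proof (induction k)
  case 0
  then show ?case using spanC_cheb[of 0 0 b] by simp
next
  case (Suc k)
  then show ?case using spanC_mulx[OF Suc.prems Suc.IH[OF Suc.prems]] by simp
qed

lemma spanC_poly:
  assumes "b \<noteq> 0" shows "spanC b N (\<lambda>y. \<Sum>k\<le>N. d k * y ^ k)"
  by (intro spanC_sum spanC_scale spanC_mono[OF _ spanC_pow[OF assms]]) auto

lemma op1_span:
  assumes "NN > 2 * N" "n \<le> N" "b \<noteq> 0" "R > 0"
    and q: "\<And>y. q y = (\<Sum>j\<le>N. \<alpha> j * cheb j (y / of_real b))"
  shows "\<And>l. l \<le> N \<Longrightarrow> cc l * ahat b R NN q l = \<alpha> l"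
    and "op1 b R NN n q y = (\<Sum>j\<le>n. \<alpha> j * cheb j (y / of_real b))"
proof -
  have qe: "q = (\<lambda>t. \<Sum>j\<le>N. \<alpha> j * cheb j (t / of_real b))" using q by auto
  have A: "cc l * ahat b R NN q l = \<alpha> l" if "l \<le> N" for l
  proof -
    have "ahat b R NN q l = (\<Sum>j\<le>N. \<alpha> j * ahat b R NN (\<lambda>t. cheb j (t / of_real b)) l)"
      unfolding qe by (rule ahat_sum) simp
    also have "\<dots> = (\<Sum>j\<le>N. \<alpha> j * (if j = l then (if l = 0 then 1 else 1/2) else 0))"
      using assms that by (intro sum.cong refl) (subst ahat_cheb, auto)
    also have "\<dots> = \<alpha> l * (if l = 0 then 1 else 1/2)"
      using that by (simp add: if_distrib sum.delta cong: if_cong)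
    finally show ?thesis by (simp add: cc_def)
  qed
  then show "\<And>l. l \<le> N \<Longrightarrow> cc l * ahat b R NN q l = \<alpha> l" by blast
  show "op1 b R NN n q y = (\<Sum>j\<le>n. \<alpha> j * cheb j (y / of_real b))"
    unfolding op1_def using assms(2) by (intro sum.cong refl) (simp add: A)
qed

lemma taylor_approx:
  assumes hol: "h holomorphic_on UNIV" and r: "r > 0"
    and hb: "\<And>t. norm t = 2*r \<Longrightarrow> norm (h t) \<le> B"
    and y: "norm y \<le> r"
  shows "norm (h y - (\<Sum>k\<le>N. ((deriv ^^ k) h 0 / fact k) * y ^ k)) \<le> B / 2 ^ N"
proof -
  define f where "f k = (deriv ^^ k) h 0 / fact k * y ^ k" for k
  have B0: "B \<ge> 0"
  proof -
    have "norm (of_real (2*r) :: complex) = 2*r" using r by simp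
    from hb[OF this] show ?thesis by (meson norm_ge_zero order_trans)
  qed
  have "y \<in> ball 0 (r+1)" using y by simp
  hence sums: "f sums h y" unfolding f_def
    using holomorphic_power_series[of h 0 "r+1" y] holomorphic_on_subset[OF hol] by simp
  have fb: "norm (f k) \<le> B / 2 ^ k" for k
  proof -
    have "norm ((deriv ^^ k) h 0) \<le> fact k * B / (2*r) ^ k"
    proof (rule Cauchy_inequality)
      show "h holomorphic_on ball 0 (2*r)" using holomorphic_on_subset[OF hol] by simp
      show "continuous_on (cball 0 (2*r)) h"
        using holomorphic_on_imp_continuous_on[OF hol] continuous_on_subset by blast
      show "0 < 2*r" using r by simp
      show "\<And>x. norm (0 - x) = 2*r \<Longrightarrow> norm (h x) \<le> B" using hb by simp
    qed
    note D = this
    have "norm (f k) = norm ((deriv ^^ k) h 0) * norm y ^ k / fact k"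
      unfolding f_def by (simp add: norm_mult norm_divide norm_power)
    also have "\<dots> \<le> (fact k * B / (2*r) ^ k) * r ^ k / fact k"
      using D y B0 r by (intro divide_right_mono mult_mono power_mono) auto
    also have "\<dots> = B / 2 ^ k" using r by (simp add: field_simps power_mult_distrib)
    finally show ?thesis .
  qed
  have s2: "(\<lambda>i. f (i + Suc N)) sums (h y - (\<Sum>i<Suc N. f i))"
    by (rule sums_split_initial_segment[OF sums])
  have gs: "(\<lambda>i. B / 2 ^ (i + Suc N)) sums (B / 2 ^ N)"
  proof -
    have "(\<lambda>i. (1/2::real) ^ i) sums 2" using geometric_sums[of "1/2::real"] by simp
    from sums_mult[OF this, of "B / 2 ^ Suc N"] show ?thesis
      by (simp add: power_add field_simps)
  qed
  have "norm (h y - (\<Sum>i<Suc N. f i)) \<le> B / 2 ^ N"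
  proof -
    have "norm (suminf (\<lambda>i. f (i + Suc N))) \<le> suminf (\<lambda>i. B / 2 ^ (i + Suc N))"
    proof (rule norm_suminf_le)
      show "norm (f (i + Suc N)) \<le> B / 2 ^ (i + Suc N)" for i by (rule fb)
      show "summable (\<lambda>i. B / 2 ^ (i + Suc N))" using gs sums_summable by blast
    qed
    then show ?thesis using s2 gs by (simp add: sums_iff)
  qed
  then show ?thesis unfolding f_def lessThan_Suc_atMost .
qed

lemma tail_geo:
  fixes R :: real
  assumes "R > 1"
  shows "(\<Sum>j\<in>{Suc n..N}. 1 / R ^ j) \<le> 1 / (R ^ n * (R - 1))"
proof -
  define x where "x = 1 / R"
  have R0: "R > 0" using assms by simp
  have x: "0 < x" "x < 1" unfolding x_def using R0 assms by (simp_all add: divide_less_eq)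
  have "(\<Sum>j\<in>{Suc n..N}. 1 / R ^ j) = (\<Sum>j\<in>{Suc n..N}. x ^ j)"
    unfolding x_def by (simp add: power_one_over)
  also have "\<dots> = (if N < Suc n then 0 else (x ^ Suc n - x ^ Suc N) / (1 - x))"
    using x by (simp add: sum_gp)
  also have "\<dots> \<le> x ^ Suc n / (1 - x)"
    using x by (auto intro!: divide_right_mono)
  also have "\<dots> = 1 / (R ^ n * (R - 1))"
    unfolding x_def using assms by (simp add: field_simps power_one_over)
  finally show ?thesis .
qed

lemma approx1:
  assumes hol: "h holomorphic_on UNIV" and b: "b > 0" and R: "R > 1" and K: "K \<ge> 1"
    and NN: "NN > 2 * N" and nN: "n \<le> N"
    and hb: "\<And>t. norm t = 2 * (b * K) \<Longrightarrow> norm (h t) \<le> B"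
    and nodes: "\<And>s. s < NN \<Longrightarrow> norm (Jb b (node R NN s)) \<le> b * K"
    and hM: "\<And>s. s < NN \<Longrightarrow> norm (h (Jb b (node R NN s))) \<le> M"
    and y: "Im y = 0" "norm y \<le> b"
  shows "norm (h y - op1 b R NN n h y)
     \<le> (1 + (R+1)/(R-1)) * (B / 2 ^ N) + 2 * (M + B / 2 ^ N) / (R ^ n * (R - 1))"
proof -
  define \<eta> where "\<eta> = B / 2 ^ N"
  define q where "q t = (\<Sum>k\<le>N. ((deriv ^^ k) h 0 / fact k) * t ^ k)" for t
  have bK: "b * K > 0" using b K by simp
  have tay: "norm (h t - q t) \<le> \<eta>" if "norm t \<le> b * K" for t
    unfolding q_def \<eta>_def by (rule taylor_approx[OF hol bK hb that])
  have NN0: "NN > 0" using NN by simp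
  obtain \<alpha> where al: "\<And>t. q t = (\<Sum>j\<le>N. \<alpha> j * cheb j (t / of_real b))"
    using spanC_poly[of b N "\<lambda>k. (deriv ^^ k) h 0 / fact k"] b unfolding spanC_def q_def by auto
  have qn: "norm (q (Jb b (node R NN s))) \<le> M + \<eta>" if "s < NN" for s
  proof -
    have "norm (q (Jb b (node R NN s))) \<le> norm (h (Jb b (node R NN s))) + norm (h (Jb b (node R NN s)) - q (Jb b (node R NN s)))"
      by (metis add_diff_cancel_left' add_diff_eq norm_triangle_ineq4 diff_add_cancel norm_minus_commute order_trans norm_triangle_ineq2)
    also have "\<dots> \<le> M + \<eta>" using hM[OF that] tay[OF nodes[OF that]] by simp
    finally show ?thesis .
  qed
  have T1: "norm (h y - q y) \<le> \<eta>" using tay y K b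
    by (intro tay) (smt (verit) mult_le_cancel_left1)
  have T3: "norm (op1 b R NN n (\<lambda>t. q t - h t) y) \<le> (R+1)/(R-1) * \<eta>"
  proof (rule op1_bound[OF NN0 R b y])
    fix s assume "s < NN"
    then show "norm (q (Jb b (node R NN s)) - h (Jb b (node R NN s))) \<le> \<eta>"
      using tay[OF nodes] by (simp add: norm_minus_commute)
  qed
  have A: "\<And>l. l \<le> N \<Longrightarrow> cc l * ahat b R NN q l = \<alpha> l"
    and O: "op1 b R NN n q y = (\<Sum>j\<le>n. \<alpha> j * cheb j (y / of_real b))"
    using op1_span[OF NN nN _ _ al] b R by auto
  have "q y - op1 b R NN n q y = (\<Sum>j\<in>{..N} - {..n}. \<alpha> j * cheb j (y / of_real b))"
    unfolding O al[of y] using nN by (subst sum_diff) auto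
  also have "{..N} - {..n} = {Suc n..N}" by auto
  finally have qe: "q y - op1 b R NN n q y = (\<Sum>j\<in>{Suc n..N}. \<alpha> j * cheb j (y / of_real b))" .
  have T2: "norm (q y - op1 b R NN n q y) \<le> 2 * (M + \<eta>) / (R ^ n * (R - 1))"
  proof -
    have "norm (q y - op1 b R NN n q y) \<le> (\<Sum>j\<in>{Suc n..N}. 2 * (M + \<eta>) * (1 / R ^ j))"
      unfolding qe
    proof (rule sum_norm_le)
      fix j assume j: "j \<in> {Suc n..N}"
      have c: "norm (cheb j (y / of_real b)) \<le> 1"
        using y b by (intro cheb_bound) (auto simp: norm_divide)
      have "norm (\<alpha> j) = norm (cc j) * norm (ahat b R NN q j)"
      proof -
        have "\<alpha> j = cc j * ahat b R NN q j" using A[of j] j by simp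
        then show ?thesis by (simp add: norm_mult)
      qed
      also have "\<dots> \<le> 2 * ((M + \<eta>) / R ^ j)"
        using j R by (intro mult_mono ahat_bound[OF NN0] qn) (auto simp: cc_def)
      finally have "norm (\<alpha> j) \<le> 2 * (M + \<eta>) * (1 / R ^ j)" by simp
      then show "norm (\<alpha> j * cheb j (y / of_real b)) \<le> 2 * (M + \<eta>) * (1 / R ^ j)"
        using c by (simp add: norm_mult) (metis mult_mono norm_ge_zero mult.right_neutral order_trans
            mult_left_mono)
    qed
    also have "\<dots> = 2 * (M + \<eta>) * (\<Sum>j\<in>{Suc n..N}. 1 / R ^ j)"
      by (simp add: sum_distrib_left)
    also have "\<dots> \<le> 2 * (M + \<eta>) * (1 / (R ^ n * (R - 1)))"
    proof (rule mult_left_mono[OF tail_geo[OF R]])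
      have "M \<ge> 0" using hM[OF NN0] by (meson norm_ge_zero order_trans)
      moreover have "\<eta> \<ge> 0"
      proof -
        have "norm (h 0 - q 0) \<le> \<eta>" using tay[of 0] bK by simp
        thus ?thesis by (meson norm_ge_zero order_trans)
      qed
      ultimately show "0 \<le> 2 * (M + \<eta>)" by simp
    qed
    finally show ?thesis by simp
  qed
  have "h y - op1 b R NN n h y = (h y - q y) + (q y - op1 b R NN n q y) + op1 b R NN n (\<lambda>t. q t - h t) y"
    unfolding op1_diff by (simp add: algebra_simps)
  hence "norm (h y - op1 b R NN n h y) \<le> norm (h y - q y) + norm (q y - op1 b R NN n q y) + norm (op1 b R NN n (\<lambda>t. q t - h t) y)"
    by (metis order_trans[OF norm_triangle_ineq add_right_mono[OF norm_triangle_ineq]])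
  also have "\<dots> \<le> \<eta> + 2 * (M + \<eta>) / (R ^ n * (R - 1)) + (R+1)/(R-1) * \<eta>"
    using T1 T2 T3 by linarith
  finally show ?thesis unfolding \<eta>_def by (simp add: algebra_simps)
qed

definition upd :: "complex ^ 'm \<Rightarrow> 'm \<Rightarrow> complex \<Rightarrow> complex ^ 'm" where
  "upd x v t = (\<chi> j. if j = v then t else x $ j)"

lemma upd_nth: "upd x v t $ j = (if j = v then t else x $ j)"
  unfolding upd_def by simp

lemma upd_same: "upd x v (x $ v) = x"
  unfolding upd_def by (simp add: vec_eq_iff)

lemma upd_eq: "upd x v t = axis v t + (x - axis v (x $ v))"
  unfolding upd_def axis_def by (simp add: vec_eq_iff)

lemma norm_axis_c: "norm (axis v (t::complex)) = norm t"
  by (simp add: norm_eq_sqrt_inner inner_axis_axis)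

lemma bl_axis: "bounded_linear (axis v :: complex \<Rightarrow> complex ^ 'm)"
proof (rule bounded_linear_intro[where K=1])
  show "axis v (x + y) = axis v x + axis v y" for x y :: complex
    unfolding axis_def by (simp add: vec_eq_iff)
  show "axis v (r *\<^sub>R x) = r *\<^sub>R axis v x" for r and x :: complex
    unfolding axis_def by (simp add: vec_eq_iff)
  show "norm (axis v x) \<le> norm x * 1" for x :: complex
    by (simp add: norm_axis_c)
qed

lemma slice_hol:
  assumes "entire_cm f"
  shows "(\<lambda>t. f (upd x v t)) holomorphic_on UNIV"
proof -
  have "(\<lambda>t. f (upd x v t)) field_differentiable (at t)" for t
  proof -
    obtain L where L: "(f has_derivative L) (at (upd x v t))" and lin: "\<And>c y. L (c *s y) = c * L y"
      using assms unfolding entire_cm_def by blast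
    have d1: "((\<lambda>t. upd x v t) has_derivative axis v) (at t)"
      unfolding upd_eq
      by (intro has_derivative_add_const bounded_linear_imp_has_derivative bl_axis)
    have "((\<lambda>t. f (upd x v t)) has_derivative (\<lambda>h. L (axis v h))) (at t)"
      using has_derivative_compose[OF d1 L] by simp
    moreover have "(\<lambda>h. L (axis v h)) = (\<lambda>h. L (axis v 1) * h)"
    proof
      fix h :: complex
      have "axis v h = h *s axis v 1" unfolding axis_def by (simp add: vec_eq_iff)
      then show "L (axis v h) = L (axis v 1) * h" using lin by (simp add: mult.commute)
    qed
    ultimately have "((\<lambda>t. f (upd x v t)) has_field_derivative L (axis v 1)) (at t)"
      unfolding has_field_derivative_def by simp
    then show ?thesis unfolding field_differentiable_def by blast
  qed
  then show ?thesis unfolding holomorphic_on_def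
    using field_differentiable_at_within by blast
qed

definition opv :: "real \<Rightarrow> real \<Rightarrow> nat \<Rightarrow> nat \<Rightarrow> 'm \<Rightarrow> (complex ^ 'm \<Rightarrow> complex) \<Rightarrow> complex ^ 'm \<Rightarrow> complex" where
  "opv b R NN n v H = (\<lambda>x. op1 b R NN n (\<lambda>t. H (upd x v t)) (x $ v))"

fun compl :: "real \<Rightarrow> real \<Rightarrow> nat \<Rightarrow> nat \<Rightarrow> 'm list \<Rightarrow> (complex ^ 'm \<Rightarrow> complex) \<Rightarrow> complex ^ 'm \<Rightarrow> complex" where
  "compl b R NN n [] H = H"
| "compl b R NN n (v # vs) H = opv b R NN n v (compl b R NN n vs H)"

lemma telescope:
  fixes f :: "complex ^ 'm \<Rightarrow> complex"
  assumes ent: "entire_cm f" and b: "b > 0" and R: "R > 1" and K: "K \<ge> 1"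
    and NN: "NN > 2 * N" and nN: "n \<le> N"
    and fB: "\<And>w. (\<forall>j. norm (w $ j) \<le> 2 * (b * K)) \<Longrightarrow> norm (f w) \<le> B"
    and fM: "\<And>w. (\<forall>j. norm (w $ j) \<le> b * K) \<Longrightarrow> norm (f w) \<le> M"
    and nodes: "\<And>s. s < NN \<Longrightarrow> norm (Jb b (node R NN s)) \<le> b * K"
    and E: "E = (1 + (R+1)/(R-1)) * (B / 2 ^ N) + 2 * (M + B / 2 ^ N) / (R ^ n * (R - 1))"
  shows "distinct vs \<Longrightarrow> (\<forall>j. norm (x $ j) \<le> b * K) \<Longrightarrow> (\<forall>j\<in>set vs. Im (x $ j) = 0 \<and> norm (x $ j) \<le> b)
     \<Longrightarrow> norm (f x - compl b R NN n vs f x) \<le> (\<Sum>i<length vs. ((R+1)/(R-1)) ^ i) * E"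
proof (induction vs arbitrary: x)
  case Nil
  then show ?case by simp
next
  case (Cons v vs)
  define \<Lambda> where "\<Lambda> = (R+1)/(R-1)"
  define S where "S = (\<Sum>i<length vs. \<Lambda> ^ i)"
  have NN0: "NN > 0" using NN by simp
  have bK: "b * K \<ge> 0" using b K by simp
  have vv: "Im (x $ v) = 0" "norm (x $ v) \<le> b" using Cons.prems by auto
  have T1: "norm (f x - op1 b R NN n (\<lambda>t. f (upd x v t)) (x $ v)) \<le> E"
  proof -
    have "norm ((\<lambda>t. f (upd x v t)) (x $ v) - op1 b R NN n (\<lambda>t. f (upd x v t)) (x $ v)) \<le> E"
      unfolding E
    proof (rule approx1[OF slice_hol[OF ent] b R K NN nN _ nodes _ vv])
      fix t :: complex assume t: "norm t = 2 * (b * K)"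
      show "norm (f (upd x v t)) \<le> B"
      proof (rule fB, rule allI)
        fix j show "norm (upd x v t $ j) \<le> 2 * (b * K)"
          using t Cons.prems(2) bK by (auto simp: upd_nth) (smt (verit))
      qed
    next
      fix s assume s: "s < NN"
      show "norm (f (upd x v (Jb b (node R NN s)))) \<le> M"
        using Cons.prems(2) nodes[OF s] by (intro fM) (auto simp: upd_nth)
    qed
    then show ?thesis by (simp add: upd_same)
  qed
  have T2: "norm (op1 b R NN n (\<lambda>t. f (upd x v t) - compl b R NN n vs f (upd x v t)) (x $ v)) \<le> \<Lambda> * (S * E)"
    unfolding \<Lambda>_def
  proof (rule op1_bound[OF NN0 R b vv])
    fix s assume s: "s < NN"
    have "v \<notin> set vs" "distinct vs" using Cons.prems(1) by auto
    then show "norm (f (upd x v (Jb b (node R NN s))) - compl b R NN n vs f (upd x v (Jb b (node R NN s)))) \<le> S * E"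
      unfolding S_def \<Lambda>_def using Cons.prems(2,3) nodes[OF s]
      by (intro Cons.IH) (auto simp: upd_nth)
  qed
  have eq: "f x - compl b R NN n (v # vs) f x
      = (f x - op1 b R NN n (\<lambda>t. f (upd x v t)) (x $ v))
        + op1 b R NN n (\<lambda>t. f (upd x v t) - compl b R NN n vs f (upd x v t)) (x $ v)"
    by (simp add: opv_def op1_diff)
  have "norm (f x - compl b R NN n (v # vs) f x) \<le> norm (f x - op1 b R NN n (\<lambda>t. f (upd x v t)) (x $ v))
        + norm (op1 b R NN n (\<lambda>t. f (upd x v t) - compl b R NN n vs f (upd x v t)) (x $ v))"
    unfolding eq by (rule norm_triangle_ineq)
  also have "\<dots> \<le> E + \<Lambda> * (S * E)" by (rule add_mono[OF T1 T2])
  also have "\<dots> = (\<Sum>i<length (v # vs). \<Lambda> ^ i) * E"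
  proof -
    have "(\<Sum>i<Suc (length vs). \<Lambda> ^ i) = 1 + \<Lambda> * S"
      unfolding S_def by (simp only: sum.lessThan_Suc_shift power_0 power_Suc sum_distrib_left)
    then show ?thesis by (simp add: algebra_simps)
  qed
  finally show ?case unfolding \<Lambda>_def .
qed

definition polyn :: "nat \<Rightarrow> (complex \<Rightarrow> complex) \<Rightarrow> bool" where
  "polyn n g \<longleftrightarrow> (\<exists>e. \<forall>y. g y = (\<Sum>i\<le>n. e i * y ^ i))"

lemma polyn_mono:
  assumes "n \<le> n'" "polyn n g" shows "polyn n' g"
proof -
  obtain e where a: "\<And>y. g y = (\<Sum>i\<le>n. e i * y ^ i)" using assms(2) unfolding polyn_def by blast
  have E: "g y = (\<Sum>i\<le>n'. (if i \<le> n then e i else 0) * y ^ i)" for y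
  proof -
    have "(\<Sum>i\<le>n'. (if i \<le> n then e i else 0) * y ^ i)
        = (\<Sum>i\<le>n'. if i \<in> {i. i \<le> n} then e i * y ^ i else 0)"
      by (rule sum.cong) auto
    also have "\<dots> = (\<Sum>i\<in>{..n'} \<inter> {i. i \<le> n}. e i * y ^ i)"
      by (simp only: sum.inter_restrict[symmetric] finite_atMost)
    also have "{..n'} \<inter> {i. i \<le> n} = {..n}" using assms(1) by auto
    finally show ?thesis unfolding a by simp
  qed
  show ?thesis unfolding polyn_def by (intro exI[of _ "\<lambda>i. if i \<le> n then e i else 0"] allI E)
qed

lemma polyn_add:
  assumes "polyn n g1" "polyn n g2" shows "polyn n (\<lambda>y. g1 y + g2 y)"
proof -
  obtain e1 where a: "\<And>y. g1 y = (\<Sum>i\<le>n. e1 i * y ^ i)" using assms(1) unfolding polyn_def by blast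
  obtain e2 where c: "\<And>y. g2 y = (\<Sum>i\<le>n. e2 i * y ^ i)" using assms(2) unfolding polyn_def by blast
  have E: "g1 y + g2 y = (\<Sum>i\<le>n. (e1 i + e2 i) * y ^ i)" for y
    unfolding a c by (simp add: sum.distrib distrib_right)
  show ?thesis unfolding polyn_def by (intro exI[of _ "\<lambda>i. e1 i + e2 i"] allI E)
qed

lemma polyn_scale:
  assumes "polyn n g" shows "polyn n (\<lambda>y. c * g y)"
proof -
  obtain e where a: "\<And>y. g y = (\<Sum>i\<le>n. e i * y ^ i)" using assms unfolding polyn_def by blast
  have E: "c * g y = (\<Sum>i\<le>n. (c * e i) * y ^ i)" for y
    unfolding a by (simp add: sum_distrib_left mult.assoc)
  show ?thesis unfolding polyn_def by (intro exI[of _ "\<lambda>i. c * e i"] allI E)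
qed

lemma polyn_mulx:
  assumes "polyn n g" shows "polyn (Suc n) (\<lambda>y. y * g y)"
proof -
  obtain e where a: "\<And>y. g y = (\<Sum>i\<le>n. e i * y ^ i)" using assms unfolding polyn_def by blast
  have E: "y * g y = (\<Sum>i\<le>Suc n. (if i = 0 then 0 else e (i - 1)) * y ^ i)" for y
    unfolding a sum.atMost_Suc_shift by (simp add: sum_distrib_left mult_ac)
  show ?thesis unfolding polyn_def by (intro exI[of _ "\<lambda>i. if i = 0 then 0 else e (i - 1)"] allI E)
qed

lemma polyn_cheb2: "polyn l (cheb l) \<and> polyn (Suc l) (cheb (Suc l))"
proof (induction l)
  case 0
  have "polyn 0 (cheb 0)" unfolding polyn_def by (intro exI[of _ "\<lambda>_. 1"]) simp
  moreover have "polyn (Suc 0) (cheb (Suc 0))" unfolding polyn_def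
    by (intro exI[of _ "\<lambda>i. if i = 1 then 1 else 0"]) (simp add: atMost_Suc)
  ultimately show ?case by blast
next
  case (Suc l)
  have ih0: "polyn l (cheb l)" and ih1: "polyn (Suc l) (cheb (Suc l))" using Suc.IH by blast+
  have a: "polyn (Suc (Suc l)) (\<lambda>y. 2 * (y * cheb (Suc l) y))"
    by (rule polyn_scale[OF polyn_mulx[OF ih1]])
  have c: "polyn (Suc (Suc l)) (\<lambda>y. (-1) * cheb l y)"
    by (rule polyn_scale[OF polyn_mono[OF _ ih0]]) simp
  have P: "polyn (Suc (Suc l)) (\<lambda>y. 2 * (y * cheb (Suc l) y) + (-1) * cheb l y)"
    by (rule polyn_add[OF a c])
  have e: "(\<lambda>y. 2 * (y * cheb (Suc l) y) + (-1) * cheb l y) = cheb (Suc (Suc l))"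
    by (rule ext) simp
  have p2: "polyn (Suc (Suc l)) (cheb (Suc (Suc l)))" using P unfolding e .
  show ?case using ih1 p2 by blast
qed

lemma cheb_coeffs:
  assumes "l \<le> n"
  shows "\<exists>e. \<forall>y. cheb l (y / of_real b) = (\<Sum>i\<le>n. e i * y ^ i)"
proof -
  obtain e where a: "\<And>y. cheb l y = (\<Sum>i\<le>n. e i * y ^ i)"
    using polyn_mono[OF assms] polyn_cheb2[of l] unfolding polyn_def by blast
  have E: "cheb l (y / of_real b) = (\<Sum>i\<le>n. (e i / of_real b ^ i) * y ^ i)" for y
    unfolding a by (simp add: power_divide)
  show ?thesis by (intro exI[of _ "\<lambda>i. e i / of_real b ^ i"] allI E)
qed

definition Kn :: "nat \<Rightarrow> ('m \<Rightarrow> nat) set" where "Kn n = {k. \<forall>j. k j \<le> n}"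

lemma finite_Kn: "finite (Kn n :: ('m::finite \<Rightarrow> nat) set)"
proof -
  have "Kn n = (PiE UNIV (\<lambda>_. {..n}) :: ('m \<Rightarrow> nat) set)"
    unfolding Kn_def by (auto simp: PiE_UNIV_domain)
  then show ?thesis by (simp add: finite_PiE)
qed

definition PQ :: "nat \<Rightarrow> 'm set \<Rightarrow> (complex ^ 'm \<Rightarrow> complex) \<Rightarrow> bool" where
  "PQ n S H \<longleftrightarrow> (\<exists>c. (\<forall>k x x'. (\<forall>j. j \<notin> S \<longrightarrow> x $ j = x' $ j) \<longrightarrow> c k x = c k x')
      \<and> (\<forall>x. H x = (\<Sum>k\<in>Kn n. c k x * (\<Prod>j\<in>S. (x $ j) ^ k j))))"

lemma PQI:
  fixes c :: "('m \<Rightarrow> nat) \<Rightarrow> complex ^ 'm \<Rightarrow> complex"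
  assumes "\<And>k x x'. (\<forall>j. j \<notin> S \<longrightarrow> x $ j = x' $ j) \<Longrightarrow> c k x = c k x'"
    and "\<And>x. H x = (\<Sum>k\<in>Kn n. c k x * (\<Prod>j\<in>S. (x $ j) ^ k j))"
  shows "PQ n S H"
  unfolding PQ_def using assms by blast

lemma PQE:
  assumes "PQ n S H"
  obtains c :: "('m \<Rightarrow> nat) \<Rightarrow> complex ^ 'm \<Rightarrow> complex"
  where "\<And>k x x'. (\<forall>j. j \<notin> S \<longrightarrow> x $ j = x' $ j) \<Longrightarrow> c k x = c k x'"
    and "\<And>x. H x = (\<Sum>k\<in>Kn n. c k x * (\<Prod>j\<in>S. (x $ j) ^ k j))"
  using assms unfolding PQ_def by blast

lemma PQ_base: "PQ n {} (f :: complex ^ 'm::finite \<Rightarrow> complex)"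
proof -
  define c where "c k x = (if k = (\<lambda>_. 0) then f x else 0)" for k :: "'m \<Rightarrow> nat" and x
  have z: "(\<lambda>_. 0) \<in> Kn n" unfolding Kn_def by simp
  show ?thesis
  proof (rule PQI[where c=c])
    fix x :: "complex ^ 'm"
    have "(\<Sum>k\<in>Kn n. c k x * (\<Prod>j\<in>{}. (x $ j) ^ k j)) = (\<Sum>k\<in>(Kn n :: ('m \<Rightarrow> nat) set). if k = (\<lambda>_. 0) then f x else 0)"
      unfolding c_def by simp
    also have "\<dots> = f x" by (simp only: sum.delta[OF finite_Kn]) (simp add: z)
    finally show "f x = (\<Sum>k\<in>Kn n. c k x * (\<Prod>j\<in>{}. (x $ j) ^ k j))" by simp
  next
    fix k and x x' :: "complex ^ 'm" assume "\<forall>j. j \<notin> ({}::'m set) \<longrightarrow> x $ j = x' $ j"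
    hence "x = x'" by (simp add: vec_eq_iff)
    thus "c k x = c k x'" by simp
  qed
qed

lemma PQ_final:
  assumes "PQ n (UNIV :: 'm::finite set) H" shows "H \<in> polyQ n"
proof -
  obtain c where c: "\<And>k (x::complex^'m) x'. c k x = c k x'" and H: "\<And>x. H x = (\<Sum>k\<in>Kn n. c k x * (\<Prod>j\<in>UNIV. (x $ j) ^ k j))"
    using assms unfolding PQ_def by auto
  have "H x = (\<Sum>k\<in>{k. \<forall>j. k j \<le> n}. c k 0 * (\<Prod>j\<in>UNIV. (x $ j) ^ k j))" for x
    unfolding H Kn_def by (simp add: c[of _ x 0])
  hence "H = (\<lambda>x. \<Sum>k\<in>{k. \<forall>j. k j \<le> n}. c k 0 * (\<Prod>j\<in>UNIV. (x $ j) ^ k j))"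
    by (intro ext)
  then show ?thesis unfolding polyQ_def by (auto intro!: exI[of _ "\<lambda>k. c k 0"])
qed

lemma PQ_step:
  fixes H :: "complex ^ 'm::finite \<Rightarrow> complex"
  assumes vS: "v \<notin> S" and PQ: "PQ n S H"
  shows "PQ n (insert v S) (opv b R NN n v H)"
proof -
  obtain c where cind: "\<And>k (x::complex^'m) x'. (\<forall>j. j \<notin> S \<longrightarrow> x $ j = x' $ j) \<Longrightarrow> c k x = c k x'"
    and H: "\<And>x. H x = (\<Sum>k\<in>Kn n. c k x * (\<Prod>j\<in>S. (x $ j) ^ k j))"
    using PQ unfolding PQ_def by auto
  have "\<forall>l. \<exists>e. l \<le> n \<longrightarrow> (\<forall>y. cheb l (y / of_real b) = (\<Sum>i\<le>n. e i * y ^ i))"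
    using cheb_coeffs by blast
  then obtain E where E0: "\<forall>l. l \<le> n \<longrightarrow> (\<forall>y. cheb l (y / of_real b) = (\<Sum>i\<le>n. E l i * y ^ i))"
    using choice[of "\<lambda>l e. l \<le> n \<longrightarrow> (\<forall>y. cheb l (y / of_real b) = (\<Sum>i\<le>n. e i * y ^ i))"] by blast
  have E: "cheb l (y / of_real b) = (\<Sum>i\<le>n. E l i * y ^ i)" if "l \<le> n" for l y
    using E0 that by blast
  have fS: "finite S" by simp
  define a where "a k l x = ahat b R NN (\<lambda>t. c k (upd x v t)) l" for k l x
  define D where "D k i x = (\<Sum>l\<le>n. cc l * a k l x * E l i)" for k i x
  define P where "P k x = (\<Prod>j\<in>S. (x $ j) ^ k j)" for k :: "'m \<Rightarrow> nat" and x :: "complex ^ 'm"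
  define c' where "c' k' x = (\<Sum>t\<le>n. D (k'(v := t)) (k' v) x)" for k' x
  have step1: "opv b R NN n v H x = (\<Sum>k\<in>Kn n. \<Sum>i\<le>n. D k i x * (P k x * (x $ v) ^ i))" for x
  proof -
    have Hu: "(\<lambda>t. H (upd x v t)) = (\<lambda>t. \<Sum>k\<in>Kn n. P k x * c k (upd x v t))"
    proof
      fix t
      have "(\<Prod>j\<in>S. (upd x v t $ j) ^ k j) = P k x" for k
        unfolding P_def using vS by (intro prod.cong refl) (auto simp: upd_nth)
      then show "H (upd x v t) = (\<Sum>k\<in>Kn n. P k x * c k (upd x v t))"
        unfolding H by (simp add: mult.commute)
    qed
    have "opv b R NN n v H x = (\<Sum>l\<le>n. cc l * (\<Sum>k\<in>Kn n. P k x * a k l x) * (\<Sum>i\<le>n. E l i * (x $ v) ^ i))"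
      unfolding opv_def op1_def Hu a_def
      by (intro sum.cong refl) (simp add: ahat_sum[OF finite_Kn] E)
    also have "\<dots> = (\<Sum>l\<le>n. \<Sum>k\<in>Kn n. \<Sum>i\<le>n. cc l * a k l x * E l i * (P k x * (x $ v) ^ i))"
      by (simp add: sum_distrib_left sum_distrib_right mult_ac)
    also have "\<dots> = (\<Sum>k\<in>Kn n. \<Sum>l\<le>n. \<Sum>i\<le>n. cc l * a k l x * E l i * (P k x * (x $ v) ^ i))"
      by (rule sum.swap)
    also have "\<dots> = (\<Sum>k\<in>Kn n. \<Sum>i\<le>n. \<Sum>l\<le>n. cc l * a k l x * E l i * (P k x * (x $ v) ^ i))"
      by (intro sum.cong refl sum.swap)
    also have "\<dots> = (\<Sum>k\<in>Kn n. \<Sum>i\<le>n. D k i x * (P k x * (x $ v) ^ i))"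
      unfolding D_def by (simp add: sum_distrib_right)
    finally show ?thesis .
  qed
  have step2: "(\<Sum>k\<in>Kn n. \<Sum>i\<le>n. D k i x * (P k x * (x $ v) ^ i))
      = (\<Sum>k\<in>Kn n. c' k x * (\<Prod>j\<in>insert v S. (x $ j) ^ k j))" for x
  proof -
    have "(\<Sum>k\<in>Kn n. c' k x * (\<Prod>j\<in>insert v S. (x $ j) ^ k j))
        = (\<Sum>k\<in>Kn n. \<Sum>t\<le>n. D (k(v := t)) (k v) x * (\<Prod>j\<in>insert v S. (x $ j) ^ k j))"
      unfolding c'_def by (simp add: sum_distrib_right)
    also have "\<dots> = (\<Sum>(k,t)\<in>Kn n \<times> {..n}. D (k(v := t)) (k v) x * (\<Prod>j\<in>insert v S. (x $ j) ^ k j))"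
      by (rule sum.cartesian_product)
    also have "\<dots> = (\<Sum>(k,i)\<in>Kn n \<times> {..n}. D k i x * (P k x * (x $ v) ^ i))"
    proof (rule sum.reindex_bij_witness[where i="\<lambda>(k,i). (k(v := i), k v)" and j="\<lambda>(k,t). (k(v := t), k v)"])
      fix a :: "('m \<Rightarrow> nat) \<times> nat" assume "a \<in> Kn n \<times> {..n}"
      then obtain k t where a: "a = (k, t)" by (cases a) auto
      show "(\<lambda>(k, i). (k(v := i), k v)) ((\<lambda>(k, t). (k(v := t), k v)) a) = a" unfolding a by simp
      show "(\<lambda>(k, t). (k(v := t), k v)) a \<in> Kn n \<times> {..n}"
        using \<open>a \<in> Kn n \<times> {..n}\<close> unfolding a Kn_def by auto
      have "(\<Prod>j\<in>insert v S. (x $ j) ^ k j) = (x $ v) ^ k v * (\<Prod>j\<in>S. (x $ j) ^ k j)"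
        using vS by (simp add: prod.insert)
      moreover have "(\<Prod>j\<in>S. (x $ j) ^ (k(v := t)) j) = (\<Prod>j\<in>S. (x $ j) ^ k j)"
        using vS by (intro prod.cong refl) auto
      ultimately show "(case (\<lambda>(k, t). (k(v := t), k v)) a of (k, i) \<Rightarrow> D k i x * (P k x * (x $ v) ^ i))
          = (case a of (k, t) \<Rightarrow> D (k(v := t)) (k v) x * (\<Prod>j\<in>insert v S. (x $ j) ^ k j))"
        unfolding a P_def by (simp add: mult_ac)
    next
      fix b' :: "('m \<Rightarrow> nat) \<times> nat" assume "b' \<in> Kn n \<times> {..n}"
      then obtain k i where b': "b' = (k, i)" by (cases b') auto
      show "(\<lambda>(k, t). (k(v := t), k v)) ((\<lambda>(k, i). (k(v := i), k v)) b') = b'" unfolding b' by simp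
      show "(\<lambda>(k, i). (k(v := i), k v)) b' \<in> Kn n \<times> {..n}"
        using \<open>b' \<in> Kn n \<times> {..n}\<close> unfolding b' Kn_def by auto
    qed
    also have "\<dots> = (\<Sum>k\<in>Kn n. \<Sum>i\<le>n. D k i x * (P k x * (x $ v) ^ i))"
      by (rule sum.cartesian_product[symmetric])
    finally show ?thesis by simp
  qed
  show ?thesis
  proof (rule PQI[where c=c'])
    fix x :: "complex ^ 'm"
    show "opv b R NN n v H x = (\<Sum>k\<in>Kn n. c' k x * (\<Prod>j\<in>insert v S. (x $ j) ^ k j))"
      using step1 step2 by simp
  next
    fix k and x x' :: "complex ^ 'm" assume ag: "\<forall>j. j \<notin> insert v S \<longrightarrow> x $ j = x' $ j"
    have "(\<lambda>t. c k (upd x v t)) = (\<lambda>t. c k (upd x' v t))" for k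
    proof
      fix t show "c k (upd x v t) = c k (upd x' v t)"
        using ag by (intro cind) (auto simp: upd_nth)
    qed
    hence "a k l x = a k l x'" for k l unfolding a_def by simp
    hence "D k i x = D k i x'" for k i unfolding D_def by simp
    thus "c' k x = c' k x'" unfolding c'_def by simp
  qed
qed

lemma PQ_compl:
  fixes f :: "complex ^ 'm::finite \<Rightarrow> complex"
  shows "distinct vs \<Longrightarrow> PQ n (set vs) (compl b R NN n vs f)"
proof (induction vs)
  case Nil then show ?case using PQ_base by simp
next
  case (Cons v vs)
  then show ?case using PQ_step[of v "set vs" n] by simp
qed

lemma sq_aux: "t > 0 \<Longrightarrow> sqrt (1 + t^2) / t = sqrt (1 / t^2 + 1)"
proof -
  assume t: "t > 0"
  have "sqrt (1 + t^2) / t = sqrt (1 + t^2) / sqrt (t^2)" using t by simp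
  also have "\<dots> = sqrt ((1 + t^2) / t^2)" by (simp add: real_sqrt_divide)
  also have "\<dots> = sqrt (1 / t^2 + 1)" using t by (simp add: add_divide_distrib)
  finally show ?thesis .
qed

lemma pos_aux: "t \<ge> 0 \<Longrightarrow> t + sqrt (1 + t^2) > (0::real)"
proof -
  assume t: "t \<ge> 0"
  have "1 + t^2 > 0" by (simp add: add_pos_nonneg)
  hence "sqrt (1 + t^2) > 0" by simp
  then show ?thesis using t by linarith
qed

lemma psi_decr:
  assumes "0 < s" "s < t"
  shows "psi t < psi s"
proof -
  have a: "sqrt (1 + t^2) / t < sqrt (1 + s^2) / s"
  proof -
    have "sqrt (1 + t^2) / t = sqrt (1 / t^2 + 1)"
      using assms by (intro sq_aux) auto
    moreover have "sqrt (1 + s^2) / s = sqrt (1 / s^2 + 1)"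
      using assms by (intro sq_aux) auto
    moreover have "1 / t^2 < 1 / s^2"
      using assms by (intro divide_strict_left_mono power_strict_mono) auto
    ultimately show ?thesis by simp
  qed
  have b: "ln (s + sqrt (1 + s^2)) < ln (t + sqrt (1 + t^2))"
  proof -
    have "sqrt (1 + s^2) \<le> sqrt (1 + t^2)" using assms by (simp add: power_mono)
    hence l: "s + sqrt (1 + s^2) < t + sqrt (1 + t^2)" using assms by linarith
    have "s + sqrt (1 + s^2) > 0" "t + sqrt (1 + t^2) > 0" using assms pos_aux by auto
    then show ?thesis using l by (subst ln_less_cancel_iff) auto
  qed
  show ?thesis unfolding psi_def using a b by linarith
qed

lemma gamma0_pos: "gamma0 > 0"
proof -
  have nz: "\<forall>x\<in>{1..8::real}. x + sqrt (1 + x^2) \<noteq> 0 \<and> x \<noteq> 0 \<and> x + sqrt (1 + x^2) > 0"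
  proof
    fix x :: real assume "x \<in> {1..8}"
    hence "x \<ge> 1" by simp
    with pos_aux[of x] show "x + sqrt (1 + x^2) \<noteq> 0 \<and> x \<noteq> 0 \<and> x + sqrt (1 + x^2) > 0" by simp
  qed
  have c: "continuous_on {1..8} psi"
    unfolding psi_def using nz
    by (intro continuous_intros) auto
  have p1: "psi 1 \<ge> 0"
  proof -
    have "ln (1 + sqrt 2) \<le> (1 + sqrt 2) - 1" by (rule ln_le_minus_one) (simp add: add_pos_nonneg)
    then show ?thesis unfolding psi_def by simp
  qed
  have p8: "psi 8 \<le> 0"
  proof -
    have s1: "sqrt 65 \<le> 16"
    proof -
      have "sqrt 65 \<le> sqrt (16^2)" by (subst real_sqrt_le_iff) simp
      then show ?thesis by simp
    qed
    have s2: "8 \<le> sqrt 65"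
    proof -
      have "sqrt (8^2) \<le> sqrt 65" by (subst real_sqrt_le_iff) simp
      then show ?thesis by simp
    qed
    have "exp (2::real) = exp (1/2) ^ 4"
      by (simp add: exp_of_nat_mult[symmetric])
    also have "\<dots> \<le> 2 ^ 4" by (intro power_mono exp_half_le2) auto
    finally have e2: "exp (2::real) \<le> 16" by simp
    have "2 \<le> ln (8 + sqrt 65)"
      using e2 s2 by (subst ln_ge_iff) (auto intro: add_pos_nonneg)
    then show ?thesis unfolding psi_def using s1 by simp
  qed
  obtain t where t: "1 \<le> t" "t \<le> 8" "psi t = 0"
    using IVT2'[of psi 8 0 1, OF p8 p1 _ c] by auto
  have "\<exists>!t. t > 0 \<and> psi t = 0"
  proof
    show "t > 0 \<and> psi t = 0" using t by simp
  next
    fix s assume s: "s > 0 \<and> psi s = 0"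
    show "s = t"
    proof (rule ccontr)
      assume "s \<noteq> t"
      then consider "s < t" | "t < s" by linarith
      then show False
        using psi_decr[of s t] psi_decr[of t s] s t by cases auto
    qed
  qed
  then have "gamma0 > 0 \<and> psi gamma0 = 0" unfolding gamma0_def by (rule theI')
  then show ?thesis by simp
qed

lemma q1: fixes R M :: real and n :: nat assumes "R - 1 > 0" "R > 0" "R^n > 0"
 shows "2 * M / R ^ n + 2 * M / (R ^ n * (R - 1)) = (2 * R / (R - 1)) * M / R ^ n"
proof -
  have "2 * M / R ^ n + 2 * M / (R ^ n * (R - 1)) = (2 * M * (R - 1) + 2 * M) / (R ^ n * (R - 1))"
    using assms by (simp add: add_divide_distrib)
  also have "2 * M * (R - 1) + 2 * M = 2 * R * M" by (simp add: algebra_simps)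
  finally show ?thesis using assms by simp
qed

lemma q2: fixes L M x :: real and m :: nat assumes "m \<ge> 1"
  shows "(real m * L ^ (m - 1)) * (L * M / x) = real m * L ^ m * M / x"
proof -
  have "L ^ (m - 1) * L = L ^ m" using assms by (metis Suc_diff_le diff_Suc_1 power_Suc2)
  then show ?thesis by (simp add: mult_ac)
qed

lemma q3: fixes R :: real and m :: nat assumes "R - 1 > 0" "R > 0"
 shows "(2 * R / (R - 1)) ^ m = 2 ^ m * (1 - 1 / R) powi (- int m)"
proof -
  have e: "1 - 1 / R = (R - 1) / R" using assms by (simp add: diff_divide_distrib)
  have "(1 - 1 / R) powi (- int m) = inverse (((R - 1) / R) ^ m)"
    unfolding e by (simp add: power_int_minus)
  also have "\<dots> = (R / (R - 1)) ^ m" by (simp add: power_inverse[symmetric])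
  finally have "(1 - 1 / R) powi (- int m) = (R / (R - 1)) ^ m" .
  moreover have "(2 * R / (R - 1)) ^ m = 2 ^ m * (R / (R - 1)) ^ m"
    by (simp add: power_mult_distrib[symmetric])
  ultimately show ?thesis by simp
qed

lemma final_arith:
  fixes R M \<eta> :: real and m n :: nat
  assumes R: "R > 1" and M: "M > 0" and eta: "\<eta> \<ge> 0" and m: "m \<ge> 1"
    and small: "\<eta> * (1 + (R+1)/(R-1) + 2/(R-1)) \<le> 2 * M / R ^ n"
  shows "(\<Sum>i<m. ((R+1)/(R-1)) ^ i) * ((1 + (R+1)/(R-1)) * \<eta> + 2 * (M + \<eta>) / (R ^ n * (R - 1)))
      \<le> real m * 2 ^ m * (1 - 1 / R) powi (- int m) * M / R ^ n"
proof -
  define \<Lambda> where "\<Lambda> = (R+1)/(R-1)"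
  define L where "L = 2 * R / (R - 1)"
  have R0: "R - 1 > 0" "R > 0" using R by auto
  have Rn: "R ^ n \<ge> 1" using R by simp
  have Rn0: "R ^ n > 0" using R by simp
  have L1: "\<Lambda> \<ge> 1" unfolding \<Lambda>_def using R0 by simp
  have LL: "\<Lambda> \<le> L" unfolding \<Lambda>_def L_def using R0 by (simp add: divide_right_mono)
  have E: "(1 + \<Lambda>) * \<eta> + 2 * (M + \<eta>) / (R ^ n * (R - 1)) \<le> L * M / R ^ n"
  proof -
    have a: "2 * \<eta> / (R ^ n * (R - 1)) \<le> 2 * \<eta> / (R - 1)"
      using R0 Rn eta by (intro divide_left_mono mult_right_mono) (auto simp: mult_pos_pos)
    have "(1 + \<Lambda>) * \<eta> + 2 * (M + \<eta>) / (R ^ n * (R - 1))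
        = (1 + \<Lambda>) * \<eta> + 2 * \<eta> / (R ^ n * (R - 1)) + 2 * M / (R ^ n * (R - 1))"
      by (simp add: add_divide_distrib distrib_left)
    also have "\<dots> \<le> (1 + \<Lambda>) * \<eta> + 2 * \<eta> / (R - 1) + 2 * M / (R ^ n * (R - 1))"
      using a by simp
    also have "(1 + \<Lambda>) * \<eta> + 2 * \<eta> / (R - 1) = \<eta> * (1 + (R+1)/(R-1) + 2/(R-1))"
      unfolding \<Lambda>_def by (simp add: algebra_simps)
    also have "\<eta> * (1 + (R+1)/(R-1) + 2/(R-1)) + 2 * M / (R ^ n * (R - 1)) \<le> 2 * M / R ^ n + 2 * M / (R ^ n * (R - 1))"
      using small by simp
    also have "2 * M / R ^ n + 2 * M / (R ^ n * (R - 1)) = L * M / R ^ n"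
      unfolding L_def using R0 Rn0 by (rule q1)
    finally show ?thesis .
  qed
  have S: "(\<Sum>i<m. \<Lambda> ^ i) \<le> real m * L ^ (m - 1)"
  proof -
    have "(\<Sum>i<m. \<Lambda> ^ i) \<le> (\<Sum>i<m. L ^ (m - 1))"
    proof (rule sum_mono)
      fix i assume "i \<in> {..<m}"
      hence "i \<le> m - 1" by simp
      have "\<Lambda> ^ i \<le> L ^ i" using L1 LL by (intro power_mono) auto
      also have "\<dots> \<le> L ^ (m - 1)" using L1 LL \<open>i \<le> m - 1\<close> by (intro power_increasing) auto
      finally show "\<Lambda> ^ i \<le> L ^ (m - 1)" .
    qed
    then show ?thesis by simp
  qed
  have Epos: "0 \<le> (1 + \<Lambda>) * \<eta> + 2 * (M + \<eta>) / (R ^ n * (R - 1))"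
    using L1 eta M R0 Rn0 by (intro add_nonneg_nonneg mult_nonneg_nonneg divide_nonneg_nonneg) auto
  have "(\<Sum>i<m. \<Lambda> ^ i) * ((1 + \<Lambda>) * \<eta> + 2 * (M + \<eta>) / (R ^ n * (R - 1)))
      \<le> (real m * L ^ (m - 1)) * (L * M / R ^ n)"
    using S E Epos L1 LL by (intro mult_mono) auto
  also have "\<dots> = real m * L ^ m * M / R ^ n"
    using m by (rule q2)
  also have "L ^ m = 2 ^ m * (1 - 1 / R) powi (- int m)"
    unfolding L_def using R0 by (rule q3)
  finally show ?thesis unfolding \<Lambda>_def by simp
qed

theorem lemmaL3p7:
  fixes f :: "complex ^ 'm \<Rightarrow> complex"
    and b \<tau> A :: real and n :: nat
  assumes "b > 0" and "\<tau> > gamma0" and "A > 0"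
    and "entire_cm f"
    and "\<And>w. norm (f w) \<le> A * exp ((real n / (real CARD('m) * b * \<tau>)) * (\<Sum>j\<in>UNIV. norm (w $ j)))"
  shows "\<exists>P \<in> polyQ n. \<forall>x \<in> cubeQ b.
           norm (f (cvec x) - P (cvec x))
             \<le> real CARD('m) * 2 ^ CARD('m) * (1 - 1 / (\<tau> + sqrt (1 + \<tau>\<^sup>2))) powi (- int CARD('m))
               * A * exp (real n * psi \<tau>)"
proof -
  note b = assms(1) and A = assms(3) and ent = assms(4) and fgrow = assms(5)
  define m where "m = CARD('m)"
  have m1: "m \<ge> 1" unfolding m_def by (simp add: Suc_le_eq)
  have tau: "\<tau> > 0" using gamma0_pos assms(2) by linarith
  define K where "K = sqrt (1 + \<tau>^2)"
  have K1: "K \<ge> 1" unfolding K_def by simp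
  have KK: "K^2 = 1 + \<tau>^2" unfolding K_def by (simp add: add_nonneg_nonneg)
  define R where "R = \<tau> + K"
  have R1: "R > 1" unfolding R_def using tau K1 by simp
  have R0: "R > 0" using R1 by simp
  have invR: "inverse R = K - \<tau>"
  proof -
    have "R * (K - \<tau>) = K^2 - \<tau>^2" unfolding R_def by (simp add: power2_eq_square algebra_simps)
    also have "\<dots> = 1" using KK by simp
    finally show ?thesis using R0 by (simp add: inverse_unique mult.commute)
  qed
  have bK: "b * K > 0" using b K1 by simp
  have nodes: "norm (Jb b (node R NN s)) \<le> b * K" for NN s
  proof -
    define z where "z = node R NN s"
    have nz: "norm z = R" unfolding z_def using R0 by (simp add: norm_node)
    have "norm (Jb b z) = b * norm (z + inverse z) / 2"
      unfolding Jb_def using b by (simp add: norm_mult norm_divide)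
    also have "\<dots> \<le> b * (norm z + norm (inverse z)) / 2"
      using b by (intro divide_right_mono mult_left_mono norm_triangle_ineq) auto
    also have "\<dots> = b * (R + inverse R) / 2" using nz by (simp add: norm_inverse)
    also have "\<dots> = b * K" unfolding invR unfolding R_def by simp
    finally show ?thesis unfolding z_def .
  qed
  define \<sigma> where "\<sigma> = real n / (real m * b * \<tau>)"
  have \<sigma>0: "\<sigma> \<ge> 0" unfolding \<sigma>_def using b tau by simp
  have fbound: "norm (f w) \<le> A * exp (\<sigma> * (real m * r))" if "\<forall>j. norm (w $ j) \<le> r" for w :: "complex ^ 'm" and r
  proof -
    have "(\<Sum>j\<in>UNIV. norm (w $ j)) \<le> real m * r"
      unfolding m_def using that sum_bounded_above[of UNIV "\<lambda>j. norm (w $ j)" r] by simp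
    hence "\<sigma> * (\<Sum>j\<in>UNIV. norm (w $ j)) \<le> \<sigma> * (real m * r)" using \<sigma>0 by (rule mult_left_mono)
    hence "exp (\<sigma> * (\<Sum>j\<in>UNIV. norm (w $ j))) \<le> exp (\<sigma> * (real m * r))" by simp
    hence "A * exp (\<sigma> * (\<Sum>j\<in>UNIV. norm (w $ j))) \<le> A * exp (\<sigma> * (real m * r))"
      using A by simp
    moreover have "norm (f w) \<le> A * exp (\<sigma> * (\<Sum>j\<in>UNIV. norm (w $ j)))"
      using fgrow[of w] unfolding \<sigma>_def m_def .
    ultimately show ?thesis by linarith
  qed
  define M where "M = A * exp (\<sigma> * (real m * (b * K)))"
  define B where "B = A * exp (\<sigma> * (real m * (2 * (b * K))))"
  have M0: "M > 0" unfolding M_def using A by simp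
  have B0: "B > 0" unfolding B_def using A by simp
  have fM: "norm (f w) \<le> M" if "\<forall>j. norm (w $ j) \<le> b * K" for w :: "complex ^ 'm"
    unfolding M_def using fbound[OF that] .
  have fB: "norm (f w) \<le> B" if "\<forall>j. norm (w $ j) \<le> 2 * (b * K)" for w :: "complex ^ 'm"
    unfolding B_def using fbound[OF that] .
  define \<Lambda> where "\<Lambda> = (R+1)/(R-1)"
  define \<delta> where "\<delta> = 2 * M / R ^ n / (1 + \<Lambda> + 2/(R-1))"
  have den: "1 + \<Lambda> + 2/(R-1) > 0" unfolding \<Lambda>_def using R1 by (simp add: add_pos_pos)
  have \<delta>0: "\<delta> > 0" unfolding \<delta>_def using M0 R0 den by simp
  obtain N0 where N0: "B / \<delta> < 2 ^ N0" using real_arch_pow[of 2 "B / \<delta>"] by auto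
  define N where "N = max N0 n"
  define \<eta> where "\<eta> = B / 2 ^ N"
  have \<eta>0: "\<eta> \<ge> 0" unfolding \<eta>_def using B0 by simp
  have "\<eta> \<le> B / 2 ^ N0" unfolding \<eta>_def N_def using B0
    by (intro divide_left_mono power_increasing) auto
  also have "B / 2 ^ N0 < \<delta>" using N0 \<delta>0 by (simp add: divide_less_eq mult.commute)
  finally have "\<eta> < \<delta>" .
  hence "\<eta> * (1 + \<Lambda> + 2/(R-1)) < 2 * M / R ^ n"
    unfolding \<delta>_def by (simp only: pos_less_divide_eq[OF den])
  hence small0: "\<eta> * (1 + \<Lambda> + 2/(R-1)) \<le> 2 * M / R ^ n" by (rule less_imp_le)
  note small = small0[unfolded \<Lambda>_def]
  define NN where "NN = 2 * N + 1"
  have NN: "NN > 2 * N" unfolding NN_def by simp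
  have nN: "n \<le> N" unfolding N_def by simp
  obtain vs :: "'m list" where vs: "set vs = UNIV" "distinct vs"
    using finite_distinct_list[of "UNIV :: 'm set"] by auto
  have len: "length vs = m" unfolding m_def using distinct_card[OF vs(2)] vs(1) by simp
  define P where "P = compl b R NN n vs f"
  have Pin: "P \<in> polyQ n"
    unfolding P_def using PQ_compl[OF vs(2), of n b R NN f] vs(1) by (intro PQ_final) simp
  define E where "E = (1 + (R+1)/(R-1)) * (B / 2 ^ N) + 2 * (M + B / 2 ^ N) / (R ^ n * (R - 1))"
  have key: "M / R ^ n = A * exp (real n * psi \<tau>)"
  proof -
    have ps: "psi \<tau> = K / \<tau> - ln R" unfolding psi_def K_def R_def by simp
    have s: "\<sigma> * (real m * (b * K)) = real n * (K / \<tau>)"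
      unfolding \<sigma>_def using m1 b tau by (simp add: field_simps)
    have "exp (real n * psi \<tau>) = exp (real n * (K / \<tau>)) / exp (real n * ln R)"
      unfolding ps by (simp add: right_diff_distrib exp_diff)
    also have "exp (real n * ln R) = R ^ n"
      using R0 by (simp add: exp_of_nat_mult)
    finally show ?thesis unfolding M_def s by simp
  qed
  show ?thesis
  proof (rule bexI[OF _ Pin], intro ballI)
    fix x :: "real ^ 'm" assume x: "x \<in> cubeQ b"
    have xb: "\<bar>x $ j\<bar> \<le> b" for j using x unfolding cubeQ_def by simp
    have c1: "\<forall>j. norm (cvec x $ j) \<le> b * K"
    proof
      fix j have "norm (cvec x $ j) = \<bar>x $ j\<bar>" unfolding cvec_def by simp
      also have "\<dots> \<le> b" by (rule xb)
      also have "\<dots> \<le> b * K" using b K1 by simp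
      finally show "norm (cvec x $ j) \<le> b * K" .
    qed
    have c2: "\<forall>j\<in>set vs. Im (cvec x $ j) = 0 \<and> norm (cvec x $ j) \<le> b"
      unfolding cvec_def using xb by simp
    have "norm (f (cvec x) - P (cvec x)) \<le> (\<Sum>i<length vs. ((R+1)/(R-1)) ^ i) * E"
      unfolding P_def
      by (rule telescope[OF ent b R1 K1 NN nN fB fM nodes E_def vs(2) c1 c2])
    also have "\<dots> \<le> real m * 2 ^ m * (1 - 1 / R) powi (- int m) * M / R ^ n"
      unfolding len E_def using final_arith[OF R1 M0 _ m1, of "B / 2 ^ N" n] small \<eta>0
      unfolding \<eta>_def by simp
    also have "\<dots> = real m * 2 ^ m * (1 - 1 / R) powi (- int m) * (M / R ^ n)" by simp
    also have "\<dots> = real CARD('m) * 2 ^ CARD('m) * (1 - 1 / (\<tau> + sqrt (1 + \<tau>\<^sup>2))) powi (- int CARD('m))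
               * A * exp (real n * psi \<tau>)"
      unfolding key by (simp add: m_def R_def K_def mult.assoc)
    finally show "norm (f (cvec x) - P (cvec x))
       \<le> real CARD('m) * 2 ^ CARD('m) * (1 - 1 / (\<tau> + sqrt (1 + \<tau>\<^sup>2))) powi (- int CARD('m))
               * A * exp (real n * psi \<tau>)" .
  qed
qed

end
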